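(* Assume the system is IFS$_m$, with a controller $\Psi$ of kind (2) whose closed loop satisfies $\|\phi(k,\sigma,x_0,\Psi)\|\le C\gamma^k\|x_0\|$ for all $x_0,\sigma,k$, where $C>1$, $\gamma\in[0,1)$. Define $V:\mathbb{R}^n\to\mathbb{R}$ by $$V(x_0)=\inf_{\Psi'\in\mathcal{C}_m}\ \sup_{\sigma\in\Sigma^\omega}\ \sum_{k=0}^{\infty}\|\phi(k,\sigma,x_0,\Psi')\|,$$ where $\mathcal{C}_m$ is the set of all functions $\mathcal{H}_-\to\mathbb{R}^m$. Then $\|x_0\|\le V(x_0)\le \frac{C}{1-\gamma}\|x_0\|$ for all $x_0\in\mathbb{R}^n$, and $V$ is a norm on $\mathbb{R}^n$ (positive definite, absolutely homogeneous of degree 1, i.e. $V(\lambda x)=|\lambda|V(x)$ for all $\lambda\in\mathbb{R}$, and subadditive); in particular $V$ is convex and continuous.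
   Context: Let $\Sigma$ be a finite nonempty set and $\{(A_i,B_i)\in\mathbb{R}^{n\times n}\times\mathbb{R}^{n\times m} : i\in\Sigma\}$. Consider $x(k+1)=A_{\sigma(k)}x(k)+B_{\sigma(k)}u(k)$, $k\in\mathbb{N}=\{0,1,\dots\}$, with arbitrary switching signal $\sigma:\mathbb{N}\to\Sigma$ (set of all such: $\Sigma^\omega$). $\|\cdot\|$ is the Euclidean norm. $\mathcal{H}_-$ is the set of all tuples $(x_k,\dots,x_0;\,i_{k-1},\dots,i_0)$ with $k\in\mathbb{N}$, $x_j\in\mathbb{R}^n$, $i_j\in\Sigma$ (mode string empty when $k=0$). For a function $\Psi:\mathcal{H}_-\to\mathbb{R}^m$ (a current-mode-independent controller with memory), $\phi(k,\sigma,x_0,\Psi)$ denotes the closed-loop trajectory defined by $x(0)=x_0$ and $x(k+1)=A_{\sigma(k)}x(k)+B_{\sigma(k)}\Psi(x(k),\dots,x(0);\,\sigma(k-1),\dots,\sigma(0))$. The system is IFS$_m$ if there exists such $\Psi$ and constants $M>0,\gamma\in[0,1)$ with $\|\phi(k,\sigma,x_0,\Psi)\|\le M\gamma^k\|x_0\|$ for all $x_0\in\mathbb{R}^n,\sigma\in\Sigma^\omega,k\in\mathbb{N}$. *)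

theory Defs
  imports "HOL-Analysis.Analysis"
begin

text \<open>A history (x_k,...,x_0; i_{k-1},...,i_0) is represented by the pair of lists
  [x_k,...,x_0] and [i_{k-1},...,i_0].\<close>

type_synonym ('n,'m,'s) controller = "(real^'n) list \<Rightarrow> 's list \<Rightarrow> real^'m"

fun hist :: "('s \<Rightarrow> real^'n^'n) \<Rightarrow> ('s \<Rightarrow> real^'m^'n) \<Rightarrow> ('n,'m,'s) controller
             \<Rightarrow> (nat \<Rightarrow> 's) \<Rightarrow> real^'n \<Rightarrow> nat \<Rightarrow> (real^'n) list" where
  "hist A B \<Psi> \<sigma> x0 0 = [x0]"
| "hist A B \<Psi> \<sigma> x0 (Suc k) =
     (let h = hist A B \<Psi> \<sigma> x0 k
      in (A (\<sigma> k) *v hd h + B (\<sigma> k) *v \<Psi> h (rev (map \<sigma> [0..<k]))) # h)"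

definition phi :: "('s \<Rightarrow> real^'n^'n) \<Rightarrow> ('s \<Rightarrow> real^'m^'n) \<Rightarrow> nat \<Rightarrow> (nat \<Rightarrow> 's)
                   \<Rightarrow> real^'n \<Rightarrow> ('n,'m,'s) controller \<Rightarrow> real^'n" where
  "phi A B k \<sigma> x0 \<Psi> = hd (hist A B \<Psi> \<sigma> x0 k)"

definition Vext :: "('s \<Rightarrow> real^'n^'n) \<Rightarrow> ('s \<Rightarrow> real^'m^'n) \<Rightarrow> real^'n \<Rightarrow> ennreal" where
  "Vext A B x0 = (INF \<Psi>::('n,'m,'s) controller. SUP \<sigma>::nat \<Rightarrow> 's.
                    (\<Sum>k. ennreal (norm (phi A B k \<sigma> x0 \<Psi>))))"

text \<open>Real-valued V (the theorem shows Vext is finite, so nothing is lost).\<close>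
definition V :: "('s \<Rightarrow> real^'n^'n) \<Rightarrow> ('s \<Rightarrow> real^'m^'n) \<Rightarrow> real^'n \<Rightarrow> real" where
  "V A B x0 = enn2real (Vext A B x0)"

end

theory Submission
  imports Defs
begin

lemma hist_cong:
  "(\<And>i. i < k \<Longrightarrow> \<sigma> i = \<sigma>' i) \<Longrightarrow> hist A B \<Psi> \<sigma> x k = hist A B \<Psi> \<sigma>' x k"
proof (induction k)
  case 0 then show ?case by simp
next
  case (Suc k)
  have "map \<sigma> [0..<k] = map \<sigma>' [0..<k]" using Suc.prems by simp
  have "hist A B \<Psi> \<sigma> x k = hist A B \<Psi> \<sigma>' x k" using Suc by simp
  moreover have "\<sigma> k = \<sigma>' k" using Suc.prems by simp
  ultimately show ?case using \<open>map \<sigma> [0..<k] = map \<sigma>' [0..<k]\<close> by (simp add: Let_def del: map_eq_conv)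
qed

definition lin_ctrl where
  "lin_ctrl A B \<Psi>1 \<Psi>2 x y a b = (\<lambda>h ms. let s = (\<lambda>i. rev ms ! i) in
     a *\<^sub>R \<Psi>1 (hist A B \<Psi>1 s x (length ms)) ms + b *\<^sub>R \<Psi>2 (hist A B \<Psi>2 s y (length ms)) ms)"

lemma phi_0: "phi A B 0 \<sigma> x \<Psi> = x"
  by (simp add: phi_def)

lemma phi_Suc: "phi A B (Suc k) \<sigma> x \<Psi> = A (\<sigma> k) *v phi A B k \<sigma> x \<Psi>
   + B (\<sigma> k) *v \<Psi> (hist A B \<Psi> \<sigma> x k) (rev (map \<sigma> [0..<k]))"
  by (simp add: phi_def Let_def)

lemma lin_ctrl_phi:
  "phi A B k \<sigma> (a *\<^sub>R x + b *\<^sub>R y) (lin_ctrl A B \<Psi>1 \<Psi>2 x y a b)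
     = a *\<^sub>R phi A B k \<sigma> x \<Psi>1 + b *\<^sub>R phi A B k \<sigma> y \<Psi>2"
proof (induction k)
  case 0 then show ?case by (simp add: phi_0)
next
  case (Suc k)
  let ?ms = "rev (map \<sigma> [0..<k])"
  have e: "\<And>i. i < k \<Longrightarrow> rev ?ms ! i = \<sigma> i" by simp
  have h1: "hist A B \<Psi>1 (\<lambda>i. rev ?ms ! i) x k = hist A B \<Psi>1 \<sigma> x k"
    by (rule hist_cong) (simp add: e)
  have h2: "hist A B \<Psi>2 (\<lambda>i. rev ?ms ! i) y k = hist A B \<Psi>2 \<sigma> y k"
    by (rule hist_cong) (simp add: e)
  have c: "lin_ctrl A B \<Psi>1 \<Psi>2 x y a b h ?ms =
      a *\<^sub>R \<Psi>1 (hist A B \<Psi>1 \<sigma> x k) ?ms + b *\<^sub>R \<Psi>2 (hist A B \<Psi>2 \<sigma> y k) ?ms" for h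
    unfolding lin_ctrl_def Let_def using h1 h2 by simp
  show ?case
    unfolding phi_Suc Suc c
    by (simp only: matrix_vector_right_distrib matrix_vector_mult_scaleR scaleR_right_distrib add_ac)
qed

definition S where
  "S A B \<Psi> x = (SUP \<sigma>. (\<Sum>k. ennreal (norm (phi A B k \<sigma> x \<Psi>))))"

lemma Vext_S: "Vext A B x = (INF \<Psi>. S A B \<Psi> x)"
  unfolding Vext_def S_def by (rule refl)

lemma suminf_lin_bound:
  fixes u v :: "nat \<Rightarrow> 'a::real_normed_vector"
  shows "(\<Sum>k. ennreal (norm (a *\<^sub>R u k + b *\<^sub>R v k)))
     \<le> ennreal \<bar>a\<bar> * (\<Sum>k. ennreal (norm (u k))) + ennreal \<bar>b\<bar> * (\<Sum>k. ennreal (norm (v k)))"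
proof -
  have "(\<Sum>k. ennreal (norm (a *\<^sub>R u k + b *\<^sub>R v k)))
     \<le> (\<Sum>k. ennreal \<bar>a\<bar> * ennreal (norm (u k)) + ennreal \<bar>b\<bar> * ennreal (norm (v k)))"
  proof (rule suminf_le)
    fix k
    have "norm (a *\<^sub>R u k + b *\<^sub>R v k) \<le> norm (a *\<^sub>R u k) + norm (b *\<^sub>R v k)"
      by (rule norm_triangle_ineq)
    also have "\<dots> = \<bar>a\<bar> * norm (u k) + \<bar>b\<bar> * norm (v k)"
      by (simp only: norm_scaleR)
    finally have "norm (a *\<^sub>R u k + b *\<^sub>R v k) \<le> \<bar>a\<bar> * norm (u k) + \<bar>b\<bar> * norm (v k)" .
    then show "ennreal (norm (a *\<^sub>R u k + b *\<^sub>R v k))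
       \<le> ennreal \<bar>a\<bar> * ennreal (norm (u k)) + ennreal \<bar>b\<bar> * ennreal (norm (v k))"
    proof -
      have "ennreal (norm (a *\<^sub>R u k + b *\<^sub>R v k)) \<le> ennreal (\<bar>a\<bar> * norm (u k) + \<bar>b\<bar> * norm (v k))"
        by (rule ennreal_leI) fact
      also have "\<dots> = ennreal (\<bar>a\<bar> * norm (u k)) + ennreal (\<bar>b\<bar> * norm (v k))"
        by (rule ennreal_plus) simp_all
      also have "\<dots> = ennreal \<bar>a\<bar> * ennreal (norm (u k)) + ennreal \<bar>b\<bar> * ennreal (norm (v k))"
        by (simp only: ennreal_mult abs_ge_zero norm_ge_zero)
      finally show ?thesis .
    qed
  qed (rule summableI)+
  also have "\<dots> = ennreal \<bar>a\<bar> * (\<Sum>k. ennreal (norm (u k))) + ennreal \<bar>b\<bar> * (\<Sum>k. ennreal (norm (v k)))"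
    using suminf_add[OF summableI summableI, of "\<lambda>k. ennreal \<bar>a\<bar> * ennreal (norm (u k))" "\<lambda>k. ennreal \<bar>b\<bar> * ennreal (norm (v k))"]
    by (simp only: ennreal_suminf_cmult)
  finally show ?thesis .
qed

lemma Vext_lin:
  "Vext A B (a *\<^sub>R x + b *\<^sub>R y) \<le> ennreal \<bar>a\<bar> * S A B \<Psi>1 x + ennreal \<bar>b\<bar> * S A B \<Psi>2 y"
proof -
  have "Vext A B (a *\<^sub>R x + b *\<^sub>R y) \<le> S A B (lin_ctrl A B \<Psi>1 \<Psi>2 x y a b) (a *\<^sub>R x + b *\<^sub>R y)"
    unfolding Vext_S by (rule INF_lower) simp
  also have "\<dots> \<le> ennreal \<bar>a\<bar> * S A B \<Psi>1 x + ennreal \<bar>b\<bar> * S A B \<Psi>2 y"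
    unfolding S_def lin_ctrl_phi
  proof (rule SUP_least)
    fix \<sigma>
    have "(\<Sum>k. ennreal (norm (a *\<^sub>R phi A B k \<sigma> x \<Psi>1 + b *\<^sub>R phi A B k \<sigma> y \<Psi>2)))
      \<le> ennreal \<bar>a\<bar> * (\<Sum>k. ennreal (norm (phi A B k \<sigma> x \<Psi>1))) + ennreal \<bar>b\<bar> * (\<Sum>k. ennreal (norm (phi A B k \<sigma> y \<Psi>2)))"
      by (rule suminf_lin_bound)
    also have "\<dots> \<le> ennreal \<bar>a\<bar> * (SUP \<sigma>. \<Sum>k. ennreal (norm (phi A B k \<sigma> x \<Psi>1))) + ennreal \<bar>b\<bar> * (SUP \<sigma>. \<Sum>k. ennreal (norm (phi A B k \<sigma> y \<Psi>2)))"
      by (rule add_mono[OF mult_left_mono[OF SUP_upper zero_le] mult_left_mono[OF SUP_upper zero_le]]) (rule UNIV_I)+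
    finally show "(\<Sum>k. ennreal (norm (a *\<^sub>R phi A B k \<sigma> x \<Psi>1 + b *\<^sub>R phi A B k \<sigma> y \<Psi>2)))
      \<le> ennreal \<bar>a\<bar> * (SUP \<sigma>. \<Sum>k. ennreal (norm (phi A B k \<sigma> x \<Psi>1))) + ennreal \<bar>b\<bar> * (SUP \<sigma>. \<Sum>k. ennreal (norm (phi A B k \<sigma> y \<Psi>2)))" .
  qed
  finally show ?thesis .
qed

lemma S_lower:
  fixes A :: "'s \<Rightarrow> real^'n^'n"
  shows "ennreal (norm x) \<le> S A B \<Psi> x"
proof -
  define \<sigma> :: "nat \<Rightarrow> 's" where "\<sigma> = (\<lambda>_. undefined)"
  have "ennreal (norm x) = (\<Sum>k<1. ennreal (norm (phi A B k \<sigma> x \<Psi>)))"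
    by (simp add: phi_0)
  also have "\<dots> \<le> (\<Sum>k. ennreal (norm (phi A B k \<sigma> x \<Psi>)))"
    by (rule sum_le_suminf) (auto intro: summableI)
  also have "\<dots> \<le> S A B \<Psi> x" unfolding S_def by (rule SUP_upper) simp
  finally show ?thesis .
qed

lemma Vext_lower: "ennreal (norm x) \<le> Vext A B x"
  unfolding Vext_S by (rule INF_greatest) (rule S_lower)

lemma Vext_upper:
  assumes "0 \<le> \<gamma>" "\<gamma> < 1"
    and bound: "\<And>x0 \<sigma> k. norm (phi A B k \<sigma> x0 \<Psi>) \<le> C * \<gamma> ^ k * norm x0"
  shows "Vext A B x \<le> ennreal (C / (1 - \<gamma>) * norm x)"
proof -
  have "Vext A B x \<le> S A B \<Psi> x" unfolding Vext_S by (rule INF_lower) simp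
  also have "\<dots> \<le> ennreal (C / (1 - \<gamma>) * norm x)"
    unfolding S_def
  proof (rule SUP_least)
    fix \<sigma>
    have C0: "0 \<le> C * \<gamma> ^ k * norm x" for k
      using bound[of k \<sigma> x] norm_ge_zero order_trans by blast
    have sm: "(\<lambda>k. C * \<gamma> ^ k * norm x) sums (C / (1 - \<gamma>) * norm x)"
    proof -
      have "(\<lambda>k. \<gamma> ^ k) sums (1 / (1 - \<gamma>))" by (rule geometric_sums) (use assms in auto)
      from sums_mult[OF this, of "C * norm x"] show ?thesis
        by (simp add: algebra_simps)
    qed
    have "(\<Sum>k. ennreal (norm (phi A B k \<sigma> x \<Psi>))) \<le> (\<Sum>k. ennreal (C * \<gamma> ^ k * norm x))"
    proof (rule suminf_le)
      show "summable (\<lambda>k. ennreal (norm (phi A B k \<sigma> x \<Psi>)))" by (rule summableI)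
      show "summable (\<lambda>k. ennreal (C * \<gamma> ^ k * norm x))" by (rule summableI)
      show "ennreal (norm (phi A B k \<sigma> x \<Psi>)) \<le> ennreal (C * \<gamma> ^ k * norm x)" for k
        by (rule ennreal_leI) (rule bound)
    qed
    also have "\<dots> = ennreal (C / (1 - \<gamma>) * norm x)"
      by (rule suminf_ennreal_eq[OF C0 sm])
    finally show "(\<Sum>k. ennreal (norm (phi A B k \<sigma> x \<Psi>))) \<le> ennreal (C / (1 - \<gamma>) * norm x)" .
  qed
  finally show ?thesis .
qed

lemma Vext_eq:
  assumes "Vext A B x < top"
  shows "Vext A B x = ennreal (V A B x)"
  unfolding V_def using assms by (rule ennreal_enn2real[symmetric])

lemma V_lin:
  assumes fin: "\<And>z. Vext A B z < top"
  shows "V A B (a *\<^sub>R x + b *\<^sub>R y) \<le> \<bar>a\<bar> * V A B x + \<bar>b\<bar> * V A B y"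
proof -
  have vx: "Vext A B x = ennreal (V A B x)" by (rule Vext_eq[OF fin])
  have vy: "Vext A B y = ennreal (V A B y)" by (rule Vext_eq[OF fin])
  have vz: "Vext A B (a *\<^sub>R x + b *\<^sub>R y) = ennreal (V A B (a *\<^sub>R x + b *\<^sub>R y))" by (rule Vext_eq[OF fin])
  have nx: "0 \<le> V A B x" and ny: "0 \<le> V A B y" unfolding V_def by (rule enn2real_nonneg)+
  have key: "V A B (a *\<^sub>R x + b *\<^sub>R y) \<le> \<bar>a\<bar> * V A B x + \<bar>b\<bar> * V A B y + (\<bar>a\<bar> + \<bar>b\<bar>) * e"
    if e: "0 < e" for e
  proof -
    have "(INF \<Psi>. S A B \<Psi> x) < ennreal (V A B x + e)"
      unfolding Vext_S[symmetric] vx by (rule ennreal_lessI) (use e nx in auto)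
    then obtain \<Psi>1 where p1: "S A B \<Psi>1 x < ennreal (V A B x + e)"
      unfolding INF_less_iff by blast
    have "(INF \<Psi>. S A B \<Psi> y) < ennreal (V A B y + e)"
      unfolding Vext_S[symmetric] vy by (rule ennreal_lessI) (use e ny in auto)
    then obtain \<Psi>2 where p2: "S A B \<Psi>2 y < ennreal (V A B y + e)"
      unfolding INF_less_iff by blast
    have "ennreal (V A B (a *\<^sub>R x + b *\<^sub>R y)) \<le> ennreal \<bar>a\<bar> * S A B \<Psi>1 x + ennreal \<bar>b\<bar> * S A B \<Psi>2 y"
      unfolding vz[symmetric] by (rule Vext_lin)
    also have "\<dots> \<le> ennreal \<bar>a\<bar> * ennreal (V A B x + e) + ennreal \<bar>b\<bar> * ennreal (V A B y + e)"
      by (rule add_mono[OF mult_left_mono[OF less_imp_le[OF p1] zero_le] mult_left_mono[OF less_imp_le[OF p2] zero_le]])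
    also have "\<dots> = ennreal (\<bar>a\<bar> * (V A B x + e) + \<bar>b\<bar> * (V A B y + e))"
      using e nx ny by (simp add: ennreal_mult ennreal_plus del: ennreal_plus_if)
    finally have "V A B (a *\<^sub>R x + b *\<^sub>R y) \<le> \<bar>a\<bar> * (V A B x + e) + \<bar>b\<bar> * (V A B y + e)"
      using e nx ny by (subst (asm) ennreal_le_iff) auto
    then show ?thesis by (simp add: algebra_simps)
  qed
  show ?thesis
  proof (rule field_le_epsilon)
    fix e :: real assume e: "0 < e"
    define d where "d = e / (\<bar>a\<bar> + \<bar>b\<bar> + 1)"
    have d: "0 < d" unfolding d_def using e by simp
    have "(\<bar>a\<bar> + \<bar>b\<bar>) * d \<le> e"
      unfolding d_def using e by (simp add: field_simps)
    then show "V A B (a *\<^sub>R x + b *\<^sub>R y) \<le> \<bar>a\<bar> * V A B x + \<bar>b\<bar> * V A B y + e"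
      using key[OF d] by linarith
  qed
qed

theorem mainTheorem3:
  fixes A :: "'s::finite \<Rightarrow> real^'n::finite^'n"
    and B :: "'s \<Rightarrow> real^'m::finite^'n"
    and \<Psi> :: "('n,'m,'s) controller"
    and C \<gamma> :: real
  assumes "C > 1" and "0 \<le> \<gamma>" and "\<gamma> < 1"
    and bound: "\<And>x0 \<sigma> k. norm (phi A B k \<sigma> x0 \<Psi>) \<le> C * \<gamma> ^ k * norm x0"
  shows "(\<forall>x0. ennreal (norm x0) \<le> Vext A B x0
                 \<and> Vext A B x0 \<le> ennreal (C / (1 - \<gamma>) * norm x0))
       \<and> (\<forall>x0. norm x0 \<le> V A B x0 \<and> V A B x0 \<le> C / (1 - \<gamma>) * norm x0)
       \<and> (\<forall>x. V A B x \<ge> 0 \<and> (V A B x = 0 \<longleftrightarrow> x = 0))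
       \<and> (\<forall>c x. V A B (c *\<^sub>R x) = \<bar>c\<bar> * V A B x)
       \<and> (\<forall>x y. V A B (x + y) \<le> V A B x + V A B y)
       \<and> convex_on UNIV (V A B)
       \<and> continuous_on UNIV (V A B)"
proof -
  define K where "K = C / (1 - \<gamma>)"
  have K0: "0 \<le> K" unfolding K_def using assms(1,3) by simp
  have up: "Vext A B x \<le> ennreal (K * norm x)" for x
    unfolding K_def by (rule Vext_upper[OF assms(2,3) bound])
  have fin: "Vext A B x < top" for x
    using up[of x] by (simp add: top.not_eq_extremum le_less_trans)
  have vx: "Vext A B x = ennreal (V A B x)" for x by (rule Vext_eq[OF fin])
  have nn: "0 \<le> V A B x" for x unfolding V_def by (rule enn2real_nonneg)
  have lo: "norm x \<le> V A B x" for x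
    using Vext_lower[of x A B] unfolding vx using nn by simp
  have hi: "V A B x \<le> K * norm x" for x
    using up[of x] unfolding vx using K0 by simp
  have lin: "V A B (a *\<^sub>R x + b *\<^sub>R y) \<le> \<bar>a\<bar> * V A B x + \<bar>b\<bar> * V A B y" for a b x y
    by (rule V_lin[OF fin])
  have V0: "V A B 0 = 0" using hi[of 0] nn[of 0] by simp
  have hom1: "V A B (c *\<^sub>R x) \<le> \<bar>c\<bar> * V A B x" for c x
    using lin[of c x 0 0] by simp
  have hom: "V A B (c *\<^sub>R x) = \<bar>c\<bar> * V A B x" for c x
  proof (cases "c = 0")
    case True then show ?thesis using V0 by simp
  next
    case False
    have "V A B x = V A B (inverse c *\<^sub>R (c *\<^sub>R x))" using False by simp
    also have "\<dots> \<le> \<bar>inverse c\<bar> * V A B (c *\<^sub>R x)" by (rule hom1)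
    finally have "\<bar>c\<bar> * V A B x \<le> V A B (c *\<^sub>R x)"
      using False by (simp add: field_simps abs_inverse)
    then show ?thesis using hom1[of c x] by linarith
  qed
  have sub: "V A B (x + y) \<le> V A B x + V A B y" for x y
    using lin[of 1 x 1 y] by simp
  have cvx: "convex_on UNIV (V A B)"
  proof (rule convex_onI)
    fix x y :: "real^'n" and t :: real
    assume "0 < t" "t < 1"
    then show "V A B ((1 - t) *\<^sub>R x + t *\<^sub>R y) \<le> (1 - t) * V A B x + t * V A B y"
      using lin[of "1 - t" x t y] by simp
  qed simp
  have lip: "K-lipschitz_on UNIV (V A B)"
  proof (rule lipschitz_onI)
    fix x y :: "real^'n"
    have "V A B x \<le> V A B y + V A B (x - y)" using sub[of y "x - y"] by simp
    moreover have "V A B y \<le> V A B x + V A B (y - x)" using sub[of x "y - x"] by simp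
    moreover have "V A B (x - y) \<le> K * dist x y" using hi[of "x - y"] by (simp add: dist_norm)
    moreover have "V A B (y - x) \<le> K * dist x y" using hi[of "y - x"] by (simp add: dist_norm norm_minus_commute)
    ultimately show "dist (V A B x) (V A B y) \<le> K * dist x y"
      unfolding dist_real_def by linarith
  qed (rule K0)
  have cont: "continuous_on UNIV (V A B)"
    by (rule lipschitz_on_continuous_on[OF lip])
  have pd: "V A B x = 0 \<longleftrightarrow> x = 0" for x
    using lo[of x] V0 nn[of x] by auto
  show ?thesis
    using lo hi up Vext_lower nn pd hom sub cvx cont
    unfolding K_def by (simp add: vx)
qed

end
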